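(* Let $\mathcal{A}=\{\mathcal{U}_n\}_{n\in\mathbb{N}}$ be a defining sequence of a space $X$. Then $\mathcal{A}$ equipped with the ultrametric $u_{\mathcal{A}}$ is tame. Furthermore, $\mathcal{A}$ equipped with an admissible metric $d$ is tame if and only if $d$ is uniformly equivalent to $u_{\mathcal{A}}$.
   Context: Spaces are nonempty separable metrizable. A partition is a cover by pairwise disjoint nonempty clopen sets; $\mathcal{U}[x]$ is the element of $\mathcal{U}$ containing $x$. A defining sequence is a sequence $\{\mathcal{U}_n\}$ of partitions, each refining the previous, whose union is a basis of the topology. $u_{\mathcal{A}}(x,y)=1/(1+j)$ with $j=\inf\{n:\mathcal{U}_n[x]\ne\mathcal{U}_n[y]\}$ ($u_{\mathcal{A}}(x,x)=0$). $\mathcal{A}$ with a metric $d$ is tame if $S_n=\sup\{\operatorname{diam}_d(O):O\in\mathcal{U}_n\}\to0$ and for each $n$ there is $\rho_n>0$ with $d(x_1,x_2)\ge\rho_n$ whenever $x_1,x_2$ are in distinct elements of $\mathcal{U}_n$. Metrics $d_1,d_2$ are uniformly equivalent if the identity maps $(X,d_1)\to(X,d_2)$ and $(X,d_2)\to(X,d_1)$ are uniformly continuous. *)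

theory Defs
  imports "HOL-Analysis.Analysis"
begin

definition is_partition :: "'a topology \<Rightarrow> 'a set set \<Rightarrow> bool" where
  "is_partition X \<U> \<longleftrightarrow>
     \<Union>\<U> = topspace X \<and>
     (\<forall>C\<in>\<U>. C \<noteq> {} \<and> openin X C \<and> closedin X C) \<and>
     (\<forall>C1\<in>\<U>. \<forall>C2\<in>\<U>. C1 \<noteq> C2 \<longrightarrow> C1 \<inter> C2 = {})"

definition cell :: "'a set set \<Rightarrow> 'a \<Rightarrow> 'a set" where
  "cell \<U> x = (THE C. C \<in> \<U> \<and> x \<in> C)"

definition refines :: "'a set set \<Rightarrow> 'a set set \<Rightarrow> bool" where
  "refines \<V> \<U> \<longleftrightarrow> (\<forall>V\<in>\<V>. \<exists>U\<in>\<U>. V \<subseteq> U)"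

definition defining_sequence :: "'a topology \<Rightarrow> (nat \<Rightarrow> 'a set set) \<Rightarrow> bool" where
  "defining_sequence X \<A> \<longleftrightarrow>
     (\<forall>n. is_partition X (\<A> n)) \<and>
     (\<forall>n. refines (\<A> (Suc n)) (\<A> n)) \<and>
     (\<forall>C\<in>(\<Union>n. \<A> n). openin X C) \<and>
     (\<forall>W. openin X W \<longrightarrow> (\<exists>\<B>. \<B> \<subseteq> (\<Union>n. \<A> n) \<and> \<Union>\<B> = W))"

definition u_metric :: "(nat \<Rightarrow> 'a set set) \<Rightarrow> 'a \<Rightarrow> 'a \<Rightarrow> real" where
  "u_metric \<A> x y =
     (if x = y then 0 else 1 / (1 + real (LEAST n. cell (\<A> n) x \<noteq> cell (\<A> n) y)))"

definition diam_d :: "('a \<Rightarrow> 'a \<Rightarrow> real) \<Rightarrow> 'a set \<Rightarrow> ereal" where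
  "diam_d d C = (SUP p\<in>C \<times> C. ereal (d (fst p) (snd p)))"

definition mesh :: "('a \<Rightarrow> 'a \<Rightarrow> real) \<Rightarrow> 'a set set \<Rightarrow> ereal" where
  "mesh d \<U> = (SUP C\<in>\<U>. diam_d d C)"

definition tame :: "'a topology \<Rightarrow> (nat \<Rightarrow> 'a set set) \<Rightarrow> ('a \<Rightarrow> 'a \<Rightarrow> real) \<Rightarrow> bool" where
  "tame X \<A> d \<longleftrightarrow>
     (\<lambda>n. mesh d (\<A> n)) \<longlonglongrightarrow> 0 \<and>
     (\<forall>n. \<exists>\<rho>>0. \<forall>x1\<in>topspace X. \<forall>x2\<in>topspace X.
         cell (\<A> n) x1 \<noteq> cell (\<A> n) x2 \<longrightarrow> d x1 x2 \<ge> \<rho>)"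

definition admissible_metric :: "'a topology \<Rightarrow> ('a \<Rightarrow> 'a \<Rightarrow> real) \<Rightarrow> bool" where
  "admissible_metric X d \<longleftrightarrow>
     Metric_space (topspace X) d \<and> Metric_space.mtopology (topspace X) d = X"

definition uniformly_equivalent :: "'a set \<Rightarrow> ('a \<Rightarrow> 'a \<Rightarrow> real) \<Rightarrow> ('a \<Rightarrow> 'a \<Rightarrow> real) \<Rightarrow> bool" where
  "uniformly_equivalent S d1 d2 \<longleftrightarrow>
     (\<forall>e>0. \<exists>\<delta>>0. \<forall>x\<in>S. \<forall>y\<in>S. d1 x y < \<delta> \<longrightarrow> d2 x y < e) \<and>
     (\<forall>e>0. \<exists>\<delta>>0. \<forall>x\<in>S. \<forall>y\<in>S. d2 x y < \<delta> \<longrightarrow> d1 x y < e)"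

end

theory Submission
  imports Defs
begin

lemma cell_props:
  assumes "is_partition X U" "x \<in> topspace X"
  shows "cell U x \<in> U \<and> x \<in> cell U x"
proof -
  have A: "\<Union>U = topspace X" "\<And>C1 C2. C1\<in>U \<Longrightarrow> C2\<in>U \<Longrightarrow> C1 \<noteq> C2 \<Longrightarrow> C1 \<inter> C2 = {}"
    using assms(1) unfolding is_partition_def by auto
  obtain C where C: "C \<in> U" "x \<in> C" using A(1) assms(2) by blast
  have U: "D = C" if "D \<in> U \<and> x \<in> D" for D
    using A(2)[of D C] C that by blast
  have "cell U x = C" unfolding cell_def
    by (rule the_equality) (use C U in blast)+
  then show ?thesis using C by simp
qed

lemma cell_eq:
  assumes "is_partition X U" "C \<in> U" "x \<in> C"
  shows "cell U x = C"
proof -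
  have A: "\<And>C1 C2. C1\<in>U \<Longrightarrow> C2\<in>U \<Longrightarrow> C1 \<noteq> C2 \<Longrightarrow> C1 \<inter> C2 = {}"
    using assms(1) unfolding is_partition_def by auto
  have U: "D = C" if "D \<in> U \<and> x \<in> D" for D
    using A[of D C] assms that by blast
  show ?thesis unfolding cell_def
    by (rule the_equality) (use assms U in blast)+
qed

lemma cell_mono:
  assumes "defining_sequence X A" "x \<in> topspace X" "y \<in> topspace X" "k \<le> n"
    "cell (A n) x = cell (A n) y"
  shows "cell (A k) x = cell (A k) y"
  using assms(4,5)
proof (induction n arbitrary: k)
  case 0
  then show ?case by simp
next
  case (Suc m)
  have P: "\<And>n. is_partition X (A n)" and R: "refines (A (Suc m)) (A m)"
    using assms(1) unfolding defining_sequence_def by auto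
  have "cell (A m) x = cell (A m) y"
  proof -
    let ?C = "cell (A (Suc m)) x"
    have C: "?C \<in> A (Suc m)" "x \<in> ?C" "y \<in> ?C"
      using cell_props[OF P assms(2)] cell_props[OF P assms(3)] Suc.prems by auto
    obtain V where V: "V \<in> A m" "?C \<subseteq> V" using R C unfolding refines_def by blast
    have "cell (A m) x = V" "cell (A m) y = V" using cell_eq[OF P V(1)] V C by auto
    then show ?thesis by simp
  qed
  then show ?case using Suc by (cases "k = Suc m") auto
qed

lemma cell_sep:
  assumes "defining_sequence X A" "Hausdorff_space X" "x \<in> topspace X" "y \<in> topspace X" "x \<noteq> y"
  shows "\<exists>n. cell (A n) x \<noteq> cell (A n) y"
proof -
  obtain W V where W: "openin X W" "openin X V" "x \<in> W" "y \<in> V" "disjnt W V"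
    using assms(2-5) unfolding Hausdorff_space_def by blast
  obtain B where B: "B \<subseteq> (\<Union>n. A n)" "\<Union>B = W" using assms(1) W(1) unfolding defining_sequence_def by metis
  obtain C where C: "C \<in> B" "x \<in> C" using B W by blast
  obtain n where n: "C \<in> A n" using B C by blast
  have P: "is_partition X (A n)" using assms(1) unfolding defining_sequence_def by auto
  have "cell (A n) x = C" using cell_eq[OF P n C(2)] .
  moreover have "y \<notin> C" using C B W unfolding disjnt_def by blast
  moreover have "y \<in> cell (A n) y" using cell_props[OF P assms(4)] by simp
  ultimately show ?thesis by auto
qed

lemma u_upper:
  assumes "defining_sequence X A" "Hausdorff_space X" "x \<in> topspace X" "y \<in> topspace X"
    "cell (A n) x = cell (A n) y"
  shows "u_metric A x y \<le> 1 / (real n + 2)"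
proof (cases "x = y")
  case True then show ?thesis by (simp add: u_metric_def)
next
  case False
  let ?j = "LEAST n. cell (A n) x \<noteq> cell (A n) y"
  obtain m where "cell (A m) x \<noteq> cell (A m) y" using cell_sep[OF assms(1-4) False] by blast
  then have j: "cell (A ?j) x \<noteq> cell (A ?j) y" by (rule LeastI)
  have "n < ?j"
  proof (rule ccontr)
    assume "\<not> n < ?j"
    then have "?j \<le> n" by simp
    from cell_mono[OF assms(1,3,4) this assms(5)] j show False by simp
  qed
  then have "real n + 2 \<le> 1 + real ?j" by simp
  then have "1 / (1 + real ?j) \<le> 1 / (real n + 2)" by (intro divide_left_mono) auto
  then show ?thesis using False by (simp add: u_metric_def)
qed

lemma u_lower:
  assumes "cell (A n) x \<noteq> cell (A n) y"
  shows "u_metric A x y \<ge> 1 / (real n + 1)"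
proof -
  let ?j = "LEAST n. cell (A n) x \<noteq> cell (A n) y"
  have "?j \<le> n" using assms by (rule Least_le)
  then have "1 / (real n + 1) \<le> 1 / (1 + real ?j)" by (intro divide_left_mono) auto
  moreover have "x \<noteq> y" using assms by auto
  ultimately show ?thesis by (simp add: u_metric_def)
qed

lemma mesh_tendsto:
  assumes P: "\<And>n. is_partition X (A n)" and ne: "topspace X \<noteq> {}"
    and d0: "\<And>x. x \<in> topspace X \<Longrightarrow> d x x = 0"
    and sm: "\<And>e. e > 0 \<Longrightarrow> \<exists>N. \<forall>n\<ge>N. \<forall>C\<in>A n. \<forall>x\<in>C. \<forall>y\<in>C. d x y \<le> e"
  shows "(\<lambda>n. mesh d (A n)) \<longlonglongrightarrow> 0"
proof (rule order_tendstoI)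
  fix a :: ereal assume "a < 0"
  have "\<forall>n. 0 \<le> mesh d (A n)"
  proof
    fix n
    obtain x where x: "x \<in> topspace X" using ne by blast
    have C: "cell (A n) x \<in> A n" "x \<in> cell (A n) x" using cell_props[OF P x] by auto
    have "ereal (d x x) \<le> diam_d d (cell (A n) x)" unfolding diam_d_def
      using C by (intro SUP_upper2[of "(x,x)"]) auto
    also have "\<dots> \<le> mesh d (A n)" unfolding mesh_def using C by (intro SUP_upper) auto
    finally show "0 \<le> mesh d (A n)" using d0[OF x] by (simp add: zero_ereal_def)
  qed
  then have "\<forall>n. a < mesh d (A n)" using \<open>a < 0\<close> by (meson less_le_trans)
  then show "\<forall>\<^sub>F n in sequentially. a < mesh d (A n)" by (rule always_eventually)
next
  fix a :: ereal assume "0 < a"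
  then obtain e where e: "0 < ereal e" "ereal e < a" using ereal_dense2 by blast
  then obtain N where N: "\<forall>n\<ge>N. \<forall>C\<in>A n. \<forall>x\<in>C. \<forall>y\<in>C. d x y \<le> e/2" using sm[of "e/2"] by auto
  have "mesh d (A n) < a" if "n \<ge> N" for n
  proof -
    have "mesh d (A n) \<le> ereal (e/2)" unfolding mesh_def diam_d_def
      using N that by (auto intro!: SUP_least)
    also have "\<dots> < ereal e" using e by auto
    finally show ?thesis using e by auto
  qed
  then show "\<forall>\<^sub>F n in sequentially. mesh d (A n) < a" unfolding eventually_sequentially by blast
qed

lemma mesh_small:
  assumes "(\<lambda>n. mesh d (A n)) \<longlonglongrightarrow> 0" "e > 0"
  shows "\<exists>n. \<forall>C\<in>A n. \<forall>x\<in>C. \<forall>y\<in>C. d x y < e"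
proof -
  have "\<forall>\<^sub>F n in sequentially. mesh d (A n) < ereal e"
    using order_tendstoD(2)[OF assms(1)] assms(2) by auto
  then obtain n where n: "mesh d (A n) < ereal e" unfolding eventually_sequentially by auto
  have "ereal (d x y) < ereal e" if "C \<in> A n" "x \<in> C" "y \<in> C" for C x y
  proof -
    have "ereal (d x y) \<le> diam_d d C" unfolding diam_d_def
      using that by (intro SUP_upper2[of "(x,y)"]) auto
    also have "\<dots> \<le> mesh d (A n)" unfolding mesh_def using that by (intro SUP_upper) auto
    finally show ?thesis using n by (rule le_less_trans)
  qed
  then show ?thesis by auto
qed

theorem proposition3p9:
  fixes X :: "'a topology" and \<A> :: "nat \<Rightarrow> 'a set set"
  assumes "topspace X \<noteq> {}" and "separable_space X" and "metrizable_space X"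
    and "defining_sequence X \<A>"
  shows "tame X \<A> (u_metric \<A>) \<and>
         (\<forall>d. admissible_metric X d \<longrightarrow>
              (tame X \<A> d \<longleftrightarrow> uniformly_equivalent (topspace X) d (u_metric \<A>)))"
proof -
  have H: "Hausdorff_space X" using assms(3) by (rule metrizable_imp_Hausdorff_space)
  have P: "\<And>n. is_partition X (\<A> n)" using assms(4) unfolding defining_sequence_def by auto
  have sub: "\<And>n C. C \<in> \<A> n \<Longrightarrow> C \<subseteq> topspace X" using P unfolding is_partition_def by blast
  have same: "cell (\<A> n) x = cell (\<A> n) y" if "C \<in> \<A> n" "x \<in> C" "y \<in> C" for n C x y
    using cell_eq[OF P that(1,2)] cell_eq[OF P that(1,3)] by simp
  have usm: "\<exists>N. \<forall>n\<ge>N. \<forall>C\<in>\<A> n. \<forall>x\<in>C. \<forall>y\<in>C. u_metric \<A> x y \<le> e" if "e > 0" for e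
  proof -
    obtain N where N: "inverse (real (Suc N)) < e" using reals_Archimedean[OF \<open>e > 0\<close>] by blast
    have "u_metric \<A> x y \<le> e" if "n \<ge> N" "C \<in> \<A> n" "x \<in> C" "y \<in> C" for n C x y
    proof -
      have "u_metric \<A> x y \<le> 1 / (real n + 2)"
        using u_upper[OF assms(4) H _ _ same[OF that(2-4)]] sub that by blast
      also have "\<dots> \<le> 1 / (real N + 1)" using that(1) by (intro divide_left_mono) auto
      finally show ?thesis using N by (simp add: inverse_eq_divide add.commute)
    qed
    then show ?thesis by blast
  qed
  have ulow: "u_metric \<A> x y < 1 / (real n + 1) \<Longrightarrow> cell (\<A> n) x = cell (\<A> n) y" for x y n
    using u_lower[of \<A> n x y] by linarith
  have part1: "tame X \<A> (u_metric \<A>)"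
    unfolding tame_def
  proof
    show "(\<lambda>n. mesh (u_metric \<A>) (\<A> n)) \<longlonglongrightarrow> 0"
      using mesh_tendsto[OF P assms(1), of "u_metric \<A>"] usm by (simp add: u_metric_def)
    show "\<forall>n. \<exists>\<rho>>0. \<forall>x1\<in>topspace X. \<forall>x2\<in>topspace X.
         cell (\<A> n) x1 \<noteq> cell (\<A> n) x2 \<longrightarrow> u_metric \<A> x1 x2 \<ge> \<rho>"
    proof
      fix n
      have "(0::real) < 1 / (real n + 1)" by simp
      then show "\<exists>\<rho>>0. \<forall>x1\<in>topspace X. \<forall>x2\<in>topspace X.
         cell (\<A> n) x1 \<noteq> cell (\<A> n) x2 \<longrightarrow> u_metric \<A> x1 x2 \<ge> \<rho>"
        using u_lower[of \<A> n] by blast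
    qed
  qed
  have part2: "tame X \<A> d \<longleftrightarrow> uniformly_equivalent (topspace X) d (u_metric \<A>)"
    if adm: "admissible_metric X d" for d
  proof -
    interpret M: Metric_space "topspace X" d using adm unfolding admissible_metric_def by blast
    have d0: "\<And>x. x \<in> topspace X \<Longrightarrow> d x x = 0" by simp
    show ?thesis
    proof
      assume T: "tame X \<A> d"
      show "uniformly_equivalent (topspace X) d (u_metric \<A>)"
        unfolding uniformly_equivalent_def
      proof (intro conjI allI impI)
        fix e :: real assume "e > 0"
        obtain n where n: "inverse (real (Suc n)) < e" using reals_Archimedean[OF \<open>e > 0\<close>] by blast
        obtain \<rho> where \<rho>: "\<rho> > 0" "\<forall>x1\<in>topspace X. \<forall>x2\<in>topspace X.
           cell (\<A> n) x1 \<noteq> cell (\<A> n) x2 \<longrightarrow> d x1 x2 \<ge> \<rho>" using T unfolding tame_def by blast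
        have "u_metric \<A> x y < e" if "x \<in> topspace X" "y \<in> topspace X" "d x y < \<rho>" for x y
        proof -
          have "cell (\<A> n) x = cell (\<A> n) y"
          proof (rule ccontr)
            assume "cell (\<A> n) x \<noteq> cell (\<A> n) y"
            then have "d x y \<ge> \<rho>" using \<rho>(2) that(1,2) by blast
            then show False using that(3) by simp
          qed
          then have "u_metric \<A> x y \<le> 1 / (real n + 2)" using u_upper[OF assms(4) H that(1,2)] by blast
          also have "\<dots> \<le> 1 / (real n + 1)" by (intro divide_left_mono) auto
          finally show ?thesis using n by (simp add: inverse_eq_divide add.commute)
        qed
        then show "\<exists>\<delta>>0. \<forall>x\<in>topspace X. \<forall>y\<in>topspace X. d x y < \<delta> \<longrightarrow> u_metric \<A> x y < e"
          using \<rho>(1) by blast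
      next
        fix e :: real assume "e > 0"
        have Tm: "(\<lambda>n. mesh d (\<A> n)) \<longlonglongrightarrow> 0" using T unfolding tame_def by (rule conjunct1)
        obtain n where n: "\<forall>C\<in>\<A> n. \<forall>x\<in>C. \<forall>y\<in>C. d x y < e"
          using mesh_small[OF Tm \<open>e > 0\<close>] by blast
        have "d x y < e" if "x \<in> topspace X" "y \<in> topspace X" "u_metric \<A> x y < 1 / (real n + 1)" for x y
        proof -
          have "cell (\<A> n) x = cell (\<A> n) y" using ulow that(3) by blast
          moreover have "cell (\<A> n) x \<in> \<A> n" "x \<in> cell (\<A> n) x" "y \<in> cell (\<A> n) y"
            using cell_props[OF P that(1)] cell_props[OF P that(2)] by auto
          ultimately show ?thesis using n by auto
        qed
        then show "\<exists>\<delta>>0. \<forall>x\<in>topspace X. \<forall>y\<in>topspace X. u_metric \<A> x y < \<delta> \<longrightarrow> d x y < e"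
          by (intro exI[of _ "1 / (real n + 1)"]) auto
      qed
    next
      assume U: "uniformly_equivalent (topspace X) d (u_metric \<A>)"
      show "tame X \<A> d" unfolding tame_def
      proof
        show "(\<lambda>n. mesh d (\<A> n)) \<longlonglongrightarrow> 0"
        proof (rule mesh_tendsto[OF P assms(1) d0])
          fix e :: real assume "e > 0"
          obtain \<delta> where \<delta>: "\<delta> > 0" "\<forall>x\<in>topspace X. \<forall>y\<in>topspace X. u_metric \<A> x y < \<delta> \<longrightarrow> d x y < e"
            using U \<open>e > 0\<close> unfolding uniformly_equivalent_def by blast
          obtain N where N: "\<forall>n\<ge>N. \<forall>C\<in>\<A> n. \<forall>x\<in>C. \<forall>y\<in>C. u_metric \<A> x y \<le> \<delta>/2"
            using usm[of "\<delta>/2"] \<delta>(1) by auto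
          have "d x y \<le> e" if "n \<ge> N" "C \<in> \<A> n" "x \<in> C" "y \<in> C" for n C x y
          proof -
            have "u_metric \<A> x y \<le> \<delta>/2" using N that by blast
            then have "u_metric \<A> x y < \<delta>" using \<delta>(1) by linarith
            moreover have "x \<in> topspace X" "y \<in> topspace X" using sub that by blast+
            ultimately have "d x y < e" using \<delta>(2) by blast
            then show ?thesis by simp
          qed
          then show "\<exists>N. \<forall>n\<ge>N. \<forall>C\<in>\<A> n. \<forall>x\<in>C. \<forall>y\<in>C. d x y \<le> e" by blast
        qed
        show "\<forall>n. \<exists>\<rho>>0. \<forall>x1\<in>topspace X. \<forall>x2\<in>topspace X.
           cell (\<A> n) x1 \<noteq> cell (\<A> n) x2 \<longrightarrow> d x1 x2 \<ge> \<rho>"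
        proof
          fix n
          obtain \<delta> where \<delta>: "\<delta> > 0" "\<forall>x\<in>topspace X. \<forall>y\<in>topspace X. d x y < \<delta> \<longrightarrow> u_metric \<A> x y < 1 / (real n + 1)"
          proof -
            have "(0::real) < 1 / (real n + 1)" by simp
            then show ?thesis using U unfolding uniformly_equivalent_def using that by blast
          qed
          have "d x1 x2 \<ge> \<delta>" if "x1 \<in> topspace X" "x2 \<in> topspace X" "cell (\<A> n) x1 \<noteq> cell (\<A> n) x2" for x1 x2
          proof (rule ccontr)
            assume "\<not> d x1 x2 \<ge> \<delta>"
            then have "d x1 x2 < \<delta>" by simp
            then have "u_metric \<A> x1 x2 < 1 / (real n + 1)" using \<delta>(2) that(1,2) by blast
            then show False using ulow that(3) by blast
          qed
          then show "\<exists>\<rho>>0. \<forall>x1\<in>topspace X. \<forall>x2\<in>topspace X.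
           cell (\<A> n) x1 \<noteq> cell (\<A> n) x2 \<longrightarrow> d x1 x2 \<ge> \<rho>"
            using \<delta>(1) by blast
        qed
      qed
    qed
  qed
  show ?thesis using part1 part2 by blast
qed

end
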